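(* Let $n\ge1$, $\preceq$ an admissible order on $L([0,1])$ and $F\colon L([0,1])^2\to L([0,1])$, $G\colon L([0,1])^n\to L([0,1])$. (i) The IV Sugeno-like $FG$-functional $\mathbf S_m^{F,\vee}$ satisfies: (a) $\mathbf S_m^{F,\vee}\succeq\wedge$ for every IV fuzzy measure $m$ whenever $F(X,\mathbf1)\succeq X$ for all $X$ and $F$ is non-decreasing in the second variable; (a$^s$) $\mathbf S_m^{F,\vee}\succeq\wedge$ for every symmetric $m$ whenever $F(X,\mathbf1)\succeq X$ for all $X$; (b) $\mathbf S_m^{F,\vee}\preceq\vee$ for every $m$ whenever $F(X,\mathbf1)\preceq X$ for all $X$ and $F$ is non-decreasing in the second variable; (b$^s$) $\mathbf S_m^{F,\vee}\preceq\vee$ for every symmetric $m$ whenever $F(X,Y)\preceq X$ for all $X,Y$; (c) $\mathbf S_m^{F,\vee}$ is internal for every $m$ whenever $F(X,\mathbf1)=X$ for all $X$ and $F$ is non-decreasing in the second variable; (c$^s$) $\mathbf S_m^{F,\vee}$ is internal for every symmetric $m$ whenever $F(X,Y)\preceq X$ and $F(X,\mathbf1)=X$ for all $X,Y$. (ii) The functional $\mathbf S_m^{\wedge,G}$ satisfies: (a) $\mathbf S_m^{\wedge,G}\succeq\wedge$ for every $m$ whenever $G=f\circ\mathrm{Proj}_1$ or $G=f\circ\vee$ for some $f\colon L([0,1])\to L([0,1])$ with $f\succeq\mathrm{Id}$; (b) $\mathbf S_m^{\wedge,G}\preceq\vee$ for every $m$ whenever $G=f\circ\mathrm{Proj}_1$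 or $G=f\circ\vee$ with $f\preceq\mathrm{Id}$; (c) $\mathbf S_m^{\wedge,G}$ is internal for every $m$ whenever $G=\mathrm{Proj}_1$ or $G=\vee$. (iii) $\mathbf S_m^{\wedge,\vee}$ is internal for every $m$.
   Context: $N=\{1,\dots,n\}$. $L([0,1])=\{[a,b]:0\le a\le b\le1\}$, $\mathbf0=[0,0]$, $\mathbf1=[1,1]$. An admissible order $\preceq$ is a total order on $L([0,1])$ with $[a,b]\preceq[c,d]$ whenever $a\le c$, $b\le d$. $\vee,\wedge$ denote maximum and minimum w.r.t. $\preceq$; monotonicity is w.r.t. $\preceq$; $\mathrm{Proj}_1(X_1,\dots,X_n)=X_1$; $f\succeq\mathrm{Id}$ means $f(X)\succeq X$ for all $X$. $\mathbf S\succeq\wedge$ means $\mathbf S(X_1,\dots,X_n)\succeq\wedge(X_1,\dots,X_n)$ for all inputs; $\mathbf S\preceq\vee$ analogously; internal means both. An IV fuzzy measure w.r.t. $\preceq$ is $m\colon2^N\to L([0,1])$, $m(\emptyset)=\mathbf0$, $m(N)=\mathbf1$, $m(A)\preceq m(B)$ for $A\subseteq B$; symmetric if $m(A)=m(B)$ whenever $|A|=|B|$. For a permutation $\sigma$, $E_{\sigma(i)}=\{\sigma(i),\dots,\sigma(n)\}$. $\mathbf S_m^{F,G}(X_1,\dots,X_n)=G\big(F(X_{\sigma(1)},m(E_{\sigma(1)})),\dots,F(X_{\sigma(n)},m(E_{\sigma(n)}))\big)$ with $\sigma$ any permutation such that $X_{\sigma(1)}\preceq\dots\preceq X_{\sigma(n)}$;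 it is defined when this value does not depend on the choice of $\sigma$ for all inputs. *)

theory Defs
  imports Complex_Main "HOL-Combinatorics.Permutations"
begin

text \<open>Closed subintervals [a,b] of [0,1] are represented as pairs (a,b).\<close>
type_synonym iv = "real \<times> real"

definition L01 :: "iv set" where
  "L01 = {(a, b). 0 \<le> a \<and> a \<le> b \<and> b \<le> 1}"

definition iv0 :: iv where "iv0 = (0, 0)"
definition iv1 :: iv where "iv1 = (1, 1)"

definition admissible_order :: "(iv \<Rightarrow> iv \<Rightarrow> bool) \<Rightarrow> bool" where
  "admissible_order le \<longleftrightarrow>
     (\<forall>x\<in>L01. le x x) \<and>
     (\<forall>x\<in>L01. \<forall>y\<in>L01. le x y \<and> le y x \<longrightarrow> x = y) \<and>
     (\<forall>x\<in>L01. \<forall>y\<in>L01. \<forall>z\<in>L01. le x y \<and> le y z \<longrightarrow> le x z) \<and>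
     (\<forall>x\<in>L01. \<forall>y\<in>L01. le x y \<or> le y x) \<and>
     (\<forall>x\<in>L01. \<forall>y\<in>L01. fst x \<le> fst y \<and> snd x \<le> snd y \<longrightarrow> le x y)"

text \<open>Inputs (X_1,...,X_n) are functions nat => iv, only indices 1..n matter.\<close>
definition inputs :: "nat \<Rightarrow> (nat \<Rightarrow> iv) set" where
  "inputs n = {X. \<forall>i\<in>{1..n}. X i \<in> L01}"

definition ivmax :: "nat \<Rightarrow> (iv \<Rightarrow> iv \<Rightarrow> bool) \<Rightarrow> (nat \<Rightarrow> iv) \<Rightarrow> iv" where
  "ivmax n le X = (THE x. x \<in> X ` {1..n} \<and> (\<forall>i\<in>{1..n}. le (X i) x))"

definition ivmin :: "nat \<Rightarrow> (iv \<Rightarrow> iv \<Rightarrow> bool) \<Rightarrow> (nat \<Rightarrow> iv) \<Rightarrow> iv" where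
  "ivmin n le X = (THE x. x \<in> X ` {1..n} \<and> (\<forall>i\<in>{1..n}. le x (X i)))"

definition ivinf :: "(iv \<Rightarrow> iv \<Rightarrow> bool) \<Rightarrow> iv \<Rightarrow> iv \<Rightarrow> iv" where
  "ivinf le X Y = (if le X Y then X else Y)"

definition IV_fuzzy_measure :: "nat \<Rightarrow> (iv \<Rightarrow> iv \<Rightarrow> bool) \<Rightarrow> (nat set \<Rightarrow> iv) \<Rightarrow> bool" where
  "IV_fuzzy_measure n le m \<longleftrightarrow>
     (\<forall>A. A \<subseteq> {1..n} \<longrightarrow> m A \<in> L01) \<and>
     m {} = iv0 \<and> m {1..n} = iv1 \<and>
     (\<forall>A B. A \<subseteq> B \<and> B \<subseteq> {1..n} \<longrightarrow> le (m A) (m B))"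

definition symmetric_measure :: "nat \<Rightarrow> (nat set \<Rightarrow> iv) \<Rightarrow> bool" where
  "symmetric_measure n m \<longleftrightarrow>
     (\<forall>A B. A \<subseteq> {1..n} \<and> B \<subseteq> {1..n} \<and> card A = card B \<longrightarrow> m A = m B)"

definition sorting_perm :: "nat \<Rightarrow> (iv \<Rightarrow> iv \<Rightarrow> bool) \<Rightarrow> (nat \<Rightarrow> iv) \<Rightarrow> (nat \<Rightarrow> nat) \<Rightarrow> bool" where
  "sorting_perm n le X \<sigma> \<longleftrightarrow> \<sigma> permutes {1..n} \<and>
     (\<forall>i j. 1 \<le> i \<and> i \<le> j \<and> j \<le> n \<longrightarrow> le (X (\<sigma> i)) (X (\<sigma> j)))"

definition SFG_perm :: "nat \<Rightarrow> (iv \<Rightarrow> iv \<Rightarrow> iv) \<Rightarrow> ((nat \<Rightarrow> iv) \<Rightarrow> iv) \<Rightarrow> (nat set \<Rightarrow> iv)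
    \<Rightarrow> (nat \<Rightarrow> nat) \<Rightarrow> (nat \<Rightarrow> iv) \<Rightarrow> iv" where
  "SFG_perm n F G m \<sigma> X =
     G (\<lambda>i. if i \<in> {1..n} then F (X (\<sigma> i)) (m (\<sigma> ` {i..n})) else iv0)"

definition SFG_defined :: "nat \<Rightarrow> (iv \<Rightarrow> iv \<Rightarrow> bool) \<Rightarrow> (iv \<Rightarrow> iv \<Rightarrow> iv) \<Rightarrow> ((nat \<Rightarrow> iv) \<Rightarrow> iv)
    \<Rightarrow> (nat set \<Rightarrow> iv) \<Rightarrow> bool" where
  "SFG_defined n le F G m \<longleftrightarrow>
     (\<forall>X\<in>inputs n. \<forall>\<sigma> \<tau>. sorting_perm n le X \<sigma> \<and> sorting_perm n le X \<tau> \<longrightarrow>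
        SFG_perm n F G m \<sigma> X = SFG_perm n F G m \<tau> X)"

definition SFG :: "nat \<Rightarrow> (iv \<Rightarrow> iv \<Rightarrow> bool) \<Rightarrow> (iv \<Rightarrow> iv \<Rightarrow> iv) \<Rightarrow> ((nat \<Rightarrow> iv) \<Rightarrow> iv)
    \<Rightarrow> (nat set \<Rightarrow> iv) \<Rightarrow> (nat \<Rightarrow> iv) \<Rightarrow> iv" where
  "SFG n le F G m X = SFG_perm n F G m (SOME \<sigma>. sorting_perm n le X \<sigma>) X"

definition above_min :: "nat \<Rightarrow> (iv \<Rightarrow> iv \<Rightarrow> bool) \<Rightarrow> ((nat \<Rightarrow> iv) \<Rightarrow> iv) \<Rightarrow> bool" where
  "above_min n le \<Phi> \<longleftrightarrow> (\<forall>X\<in>inputs n. le (ivmin n le X) (\<Phi> X))"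

definition below_max :: "nat \<Rightarrow> (iv \<Rightarrow> iv \<Rightarrow> bool) \<Rightarrow> ((nat \<Rightarrow> iv) \<Rightarrow> iv) \<Rightarrow> bool" where
  "below_max n le \<Phi> \<longleftrightarrow> (\<forall>X\<in>inputs n. le (\<Phi> X) (ivmax n le X))"

definition internal :: "nat \<Rightarrow> (iv \<Rightarrow> iv \<Rightarrow> bool) \<Rightarrow> ((nat \<Rightarrow> iv) \<Rightarrow> iv) \<Rightarrow> bool" where
  "internal n le \<Phi> \<longleftrightarrow> above_min n le \<Phi> \<and> below_max n le \<Phi>"

definition mono_second :: "(iv \<Rightarrow> iv \<Rightarrow> bool) \<Rightarrow> (iv \<Rightarrow> iv \<Rightarrow> iv) \<Rightarrow> bool" where
  "mono_second le F \<longleftrightarrow> (\<forall>X\<in>L01. \<forall>Y\<in>L01. \<forall>Z\<in>L01. le Y Z \<longrightarrow> le (F X Y) (F X Z))"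

definition is_f_proj1 :: "nat \<Rightarrow> ((nat \<Rightarrow> iv) \<Rightarrow> iv) \<Rightarrow> (iv \<Rightarrow> iv) \<Rightarrow> bool" where
  "is_f_proj1 n G f \<longleftrightarrow> (\<forall>Y\<in>inputs n. G Y = f (Y 1))"

definition is_f_max :: "nat \<Rightarrow> (iv \<Rightarrow> iv \<Rightarrow> bool) \<Rightarrow> ((nat \<Rightarrow> iv) \<Rightarrow> iv) \<Rightarrow> (iv \<Rightarrow> iv) \<Rightarrow> bool" where
  "is_f_max n le G f \<longleftrightarrow> (\<forall>Y\<in>inputs n. G Y = f (ivmax n le Y))"

end

theory Submission
  imports Defs
begin


lemma adm_refl: "admissible_order le \<Longrightarrow> x \<in> L01 \<Longrightarrow> le x x"
  unfolding admissible_order_def by blast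
lemma adm_antisym: "admissible_order le \<Longrightarrow> x \<in> L01 \<Longrightarrow> y \<in> L01 \<Longrightarrow> le x y \<Longrightarrow> le y x \<Longrightarrow> x = y"
  unfolding admissible_order_def by blast
lemma adm_trans: "admissible_order le \<Longrightarrow> x \<in> L01 \<Longrightarrow> y \<in> L01 \<Longrightarrow> z \<in> L01 \<Longrightarrow> le x y \<Longrightarrow> le y z \<Longrightarrow> le x z"
  unfolding admissible_order_def by blast
lemma adm_total: "admissible_order le \<Longrightarrow> x \<in> L01 \<Longrightarrow> y \<in> L01 \<Longrightarrow> le x y \<or> le y x"
  unfolding admissible_order_def by blast
lemma iv1_L01: "iv1 \<in> L01" by (simp add: iv1_def L01_def)
lemma adm_top:
  assumes adm: "admissible_order le" and x: "x \<in> L01" shows "le x iv1"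
proof -
  have "fst x \<le> fst iv1 \<and> snd x \<le> snd iv1" using x by (auto simp: L01_def iv1_def)
  moreover have "\<forall>x\<in>L01. \<forall>y\<in>L01. fst x \<le> fst y \<and> snd x \<le> snd y \<longrightarrow> le x y"
    using adm unfolding admissible_order_def by blast
  ultimately show ?thesis using x iv1_L01 by blast
qed

lemma sort_exists:
  assumes adm: "admissible_order le" and X: "X \<in> inputs n"
  shows "\<exists>\<sigma>. sorting_perm n le X \<sigma>"
proof -
  have XL: "i \<in> {1..n} \<Longrightarrow> X i \<in> L01" for i using X by (auto simp: inputs_def)
  define S where "S i = {j\<in>{1..n}. le (X j) (X i) \<and> X j \<noteq> X i}" for i
  define key where "key i = card (S i)" for i
  have key_mono: "le (X i) (X j)" if ij: "i\<in>{1..n}" "j\<in>{1..n}" "key i \<le> key j" for i j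
  proof (rule ccontr)
    assume nl: "\<not> le (X i) (X j)"
    hence ji: "le (X j) (X i)" using adm_total[OF adm XL XL] ij by blast
    have ne: "X j \<noteq> X i" using nl adm_refl[OF adm XL] ij by auto
    have sub: "S j \<subseteq> S i"
    proof
      fix k assume "k \<in> S j"
      hence k: "k \<in> {1..n}" "le (X k) (X j)" "X k \<noteq> X j" by (auto simp: S_def)
      have "le (X k) (X i)" using adm_trans[OF adm XL XL XL] k ji ij by blast
      moreover have "X k \<noteq> X i" using k nl by auto
      ultimately show "k \<in> S i" using k by (auto simp: S_def)
    qed
    have "j \<in> S i" "j \<notin> S j" using ij ji ne by (auto simp: S_def)
    hence "S j \<subset> S i" using sub by blast
    hence "card (S j) < card (S i)" by (rule psubset_card_mono[rotated]) (simp add: S_def)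
    thus False using ij by (simp add: key_def)
  qed
  define xs where "xs = sort_key key [1..<Suc n]"
  have dist: "distinct xs" and setxs: "set xs = {1..n}" and len: "length xs = n"
    and srt: "sorted (map key xs)"
    by (auto simp: xs_def length_sort)
  define \<sigma> where "\<sigma> i = (if i \<in> {1..n} then xs!(i-1) else i)" for i
  have inj: "inj_on \<sigma> {1..n}"
  proof (rule inj_onI)
    fix i j assume "i \<in> {1..n}" "j \<in> {1..n}" "\<sigma> i = \<sigma> j"
    thus "i = j" using dist len by (auto simp: \<sigma>_def nth_eq_iff_index_eq)
  qed
  have img: "\<sigma> ` {1..n} \<subseteq> {1..n}"
  proof
    fix y assume "y \<in> \<sigma> ` {1..n}"
    then obtain i where i: "i \<in> {1..n}" "y = \<sigma> i" by blast
    have "xs!(i-1) \<in> set xs" using i len by (intro nth_mem) auto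
    thus "y \<in> {1..n}" using i setxs by (simp add: \<sigma>_def)
  qed
  have "\<sigma> ` {1..n} = {1..n}" by (rule endo_inj_surj[OF _ img inj]) simp
  hence bij: "bij_betw \<sigma> {1..n} {1..n}" using inj by (simp add: bij_betw_def)
  have perm: "\<sigma> permutes {1..n}"
    by (rule bij_imp_permutes[OF bij]) (auto simp: \<sigma>_def)
  have "le (X (\<sigma> i)) (X (\<sigma> j))" if "1 \<le> i" "i \<le> j" "j \<le> n" for i j
  proof -
    have "key (xs!(i-1)) \<le> key (xs!(j-1))"
      using sorted_nth_mono[OF srt, of "i-1" "j-1"] that len by simp
    moreover have "\<sigma> i \<in> {1..n}" "\<sigma> j \<in> {1..n}" proof -
      have "i \<in> {1..n}" "j \<in> {1..n}" using that by auto
      thus "\<sigma> i \<in> {1..n}" "\<sigma> j \<in> {1..n}" using img by blast+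
    qed
    ultimately show ?thesis using key_mono that by (simp add: \<sigma>_def)
  qed
  thus ?thesis using perm unfolding sorting_perm_def by blast
qed

lemma max_props:
  assumes adm: "admissible_order le" and n: "n \<ge> 1" and Y: "Y \<in> inputs n"
  shows "ivmax n le Y \<in> Y ` {1..n}" "\<And>i. i \<in> {1..n} \<Longrightarrow> le (Y i) (ivmax n le Y)"
    "ivmax n le Y \<in> L01"
proof -
  have YL: "i \<in> {1..n} \<Longrightarrow> Y i \<in> L01" for i using Y by (auto simp: inputs_def)
  obtain \<sigma> where s: "sorting_perm n le Y \<sigma>" using sort_exists[OF adm Y] by blast
  hence perm: "\<sigma> permutes {1..n}" by (simp add: sorting_perm_def)
  have sn: "\<sigma> n \<in> {1..n}" using n permutes_in_image[OF perm] by auto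
  have P: "Y (\<sigma> n) \<in> Y ` {1..n} \<and> (\<forall>i\<in>{1..n}. le (Y i) (Y (\<sigma> n)))"
  proof (intro conjI ballI)
    show "Y (\<sigma> n) \<in> Y ` {1..n}" using sn by blast
    fix i assume i: "i \<in> {1..n}"
    then obtain k where k: "k \<in> {1..n}" "i = \<sigma> k" using permutes_image[OF perm] by blast
    thus "le (Y i) (Y (\<sigma> n))" using s by (auto simp: sorting_perm_def)
  qed
  have eq: "ivmax n le Y = Y (\<sigma> n)"
    unfolding ivmax_def
  proof (rule the_equality)
    show "Y (\<sigma> n) \<in> Y ` {1..n} \<and> (\<forall>i\<in>{1..n}. le (Y i) (Y (\<sigma> n)))" by (rule P)
    fix x assume x: "x \<in> Y ` {1..n} \<and> (\<forall>i\<in>{1..n}. le (Y i) x)"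
    then obtain j where j: "j \<in> {1..n}" "x = Y j" by blast
    show "x = Y (\<sigma> n)"
      using adm_antisym[OF adm YL[OF j(1)] YL[OF sn]] x P j sn by auto
  qed
  show "ivmax n le Y \<in> Y ` {1..n}" "\<And>i. i \<in> {1..n} \<Longrightarrow> le (Y i) (ivmax n le Y)"
    using P eq by auto
  show "ivmax n le Y \<in> L01" using eq YL[OF sn] by simp
qed

lemma min_props:
  assumes adm: "admissible_order le" and n: "n \<ge> 1" and Y: "Y \<in> inputs n"
  shows "ivmin n le Y \<in> Y ` {1..n}" "\<And>i. i \<in> {1..n} \<Longrightarrow> le (ivmin n le Y) (Y i)"
    "ivmin n le Y \<in> L01"
proof -
  have YL: "i \<in> {1..n} \<Longrightarrow> Y i \<in> L01" for i using Y by (auto simp: inputs_def)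
  obtain \<sigma> where s: "sorting_perm n le Y \<sigma>" using sort_exists[OF adm Y] by blast
  hence perm: "\<sigma> permutes {1..n}" by (simp add: sorting_perm_def)
  have sn: "\<sigma> 1 \<in> {1..n}" using n permutes_in_image[OF perm] by auto
  have P: "Y (\<sigma> 1) \<in> Y ` {1..n} \<and> (\<forall>i\<in>{1..n}. le (Y (\<sigma> 1)) (Y i))"
  proof (intro conjI ballI)
    show "Y (\<sigma> 1) \<in> Y ` {1..n}" using sn by blast
    fix i assume i: "i \<in> {1..n}"
    then obtain k where k: "k \<in> {1..n}" "i = \<sigma> k" using permutes_image[OF perm] by blast
    thus "le (Y (\<sigma> 1)) (Y i)" using s by (auto simp: sorting_perm_def)
  qed
  have eq: "ivmin n le Y = Y (\<sigma> 1)"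
    unfolding ivmin_def
  proof (rule the_equality)
    show "Y (\<sigma> 1) \<in> Y ` {1..n} \<and> (\<forall>i\<in>{1..n}. le (Y (\<sigma> 1)) (Y i))" by (rule P)
    fix x assume x: "x \<in> Y ` {1..n} \<and> (\<forall>i\<in>{1..n}. le x (Y i))"
    then obtain j where j: "j \<in> {1..n}" "x = Y j" by blast
    show "x = Y (\<sigma> 1)"
      using adm_antisym[OF adm YL[OF j(1)] YL[OF sn]] x P j sn by auto
  qed
  show "ivmin n le Y \<in> Y ` {1..n}" "\<And>i. i \<in> {1..n} \<Longrightarrow> le (ivmin n le Y) (Y i)"
    using P eq by auto
  show "ivmin n le Y \<in> L01" using eq YL[OF sn] by simp
qed

lemma max_le:
  assumes adm: "admissible_order le" and n: "n \<ge> 1" and Y: "Y \<in> inputs n"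
    and B: "B \<in> L01" and H: "\<And>i. i \<in> {1..n} \<Longrightarrow> le (Y i) B"
  shows "le (ivmax n le Y) B"
  using max_props(1)[OF adm n Y] H by auto

lemma SFG_perm_ex:
  assumes adm: "admissible_order le" and X: "X \<in> inputs n"
  shows "\<exists>\<sigma>. \<sigma> permutes {1..n} \<and> SFG n le F G m X = SFG_perm n F G m \<sigma> X"
proof -
  let ?s = "SOME \<sigma>. sorting_perm n le X \<sigma>"
  have "sorting_perm n le X ?s" using sort_exists[OF adm X] by (rule someI_ex)
  thus ?thesis unfolding SFG_def sorting_perm_def by blast
qed


lemma basics:
  assumes adm: "admissible_order le" and n: "n \<ge> 1"
    and Fr: "\<forall>X\<in>L01. \<forall>Y\<in>L01. F X Y \<in> L01"
    and m: "IV_fuzzy_measure n le m" and X: "X \<in> inputs n" and perm: "\<sigma> permutes {1..n}"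
  defines "Yv \<equiv> \<lambda>i. if i \<in> {1..n} then F (X (\<sigma> i)) (m (\<sigma> ` {i..n})) else iv0"
  shows "Yv \<in> inputs n" "Yv 1 = F (X (\<sigma> 1)) iv1"
    "\<And>i. i \<in> {1..n} \<Longrightarrow> X (\<sigma> i) \<in> L01 \<and> m (\<sigma> ` {i..n}) \<in> L01 \<and>
        le (m (\<sigma> ` {i..n})) iv1 \<and> Yv i = F (X (\<sigma> i)) (m (\<sigma> ` {i..n})) \<and>
        le (X (\<sigma> i)) (ivmax n le X)"
    "X (\<sigma> 1) \<in> L01" "le (ivmin n le X) (X (\<sigma> 1))"
    "SFG_perm n F G m \<sigma> X = G Yv"
proof -
  have XL: "i \<in> {1..n} \<Longrightarrow> X i \<in> L01" for i using X by (auto simp: inputs_def)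
  have sig: "i \<in> {1..n} \<Longrightarrow> \<sigma> i \<in> {1..n}" for i using permutes_in_image[OF perm] by blast
  have sub: "\<sigma> ` {i..n} \<subseteq> {1..n}" if "i \<ge> 1" for i
    using image_mono[of "{i..n}" "{1..n}" \<sigma>] permutes_image[OF perm] that by auto
  have mL: "m (\<sigma> ` {i..n}) \<in> L01" if "i \<ge> 1" for i using m sub[OF that] by (auto simp: IV_fuzzy_measure_def)
  have m1: "le (m (\<sigma> ` {i..n})) iv1" if "i \<ge> 1" for i
  proof -
    have "le (m (\<sigma> ` {i..n})) (m {1..n})" using m sub[OF that] unfolding IV_fuzzy_measure_def by blast
    thus ?thesis using m unfolding IV_fuzzy_measure_def by simp
  qed
  show P: "\<And>i. i \<in> {1..n} \<Longrightarrow> X (\<sigma> i) \<in> L01 \<and> m (\<sigma> ` {i..n}) \<in> L01 \<and>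
        le (m (\<sigma> ` {i..n})) iv1 \<and> Yv i = F (X (\<sigma> i)) (m (\<sigma> ` {i..n})) \<and>
        le (X (\<sigma> i)) (ivmax n le X)"
    using XL sig mL m1 max_props(2)[OF adm n X] by (auto simp: Yv_def)
  show "Yv \<in> inputs n" using P Fr by (auto simp: inputs_def)
  have "\<sigma> ` {1..n} = {1..n}" using permutes_image[OF perm] .
  thus "Yv 1 = F (X (\<sigma> 1)) iv1" using m n by (auto simp: Yv_def IV_fuzzy_measure_def)
  show "X (\<sigma> 1) \<in> L01" using P n by auto
  show "le (ivmin n le X) (X (\<sigma> 1))" using min_props(2)[OF adm n X] sig n by auto
  show "SFG_perm n F G m \<sigma> X = G Yv" by (simp add: SFG_perm_def Yv_def)
qed

lemma ivinf_L01: "admissible_order le \<Longrightarrow> X \<in> L01 \<Longrightarrow> Y \<in> L01 \<Longrightarrow> ivinf le X Y \<in> L01"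
  by (simp add: ivinf_def)
lemma ivinf_le: "admissible_order le \<Longrightarrow> X \<in> L01 \<Longrightarrow> Y \<in> L01 \<Longrightarrow> le (ivinf le X Y) X"
proof -
  assume a: "admissible_order le" "X \<in> L01" "Y \<in> L01"
  show ?thesis
  proof (cases "le X Y")
    case True thus ?thesis using adm_refl[OF a(1,2)] by (simp add: ivinf_def)
  next
    case False thus ?thesis using adm_total[OF a] by (simp add: ivinf_def)
  qed
qed
lemma ivinf_1: "admissible_order le \<Longrightarrow> X \<in> L01 \<Longrightarrow> ivinf le X iv1 = X"
  using adm_top[of le X] by (simp add: ivinf_def)

lemma partA:
  assumes adm: "admissible_order le" and n: "n \<ge> 1"
    and Fr: "\<forall>X\<in>L01. \<forall>Y\<in>L01. F X Y \<in> L01"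
    and m: "IV_fuzzy_measure n le m" and H: "\<forall>X\<in>L01. le X (F X iv1)"
  shows "above_min n le (SFG n le F (ivmax n le) m)"
  unfolding above_min_def
proof
  fix X assume X: "X \<in> inputs n"
  obtain \<sigma> where perm: "\<sigma> permutes {1..n}" and eq: "SFG n le F (ivmax n le) m X = SFG_perm n F (ivmax n le) m \<sigma> X"
    using SFG_perm_ex[OF adm X] by blast
  note S = basics[OF adm n Fr m X perm]
  let ?Y = "\<lambda>i. if i \<in> {1..n} then F (X (\<sigma> i)) (m (\<sigma> ` {i..n})) else iv0"
  have y1: "?Y 1 \<in> L01" using S(1) n by (auto simp: inputs_def)
  have a1: "le (ivmin n le X) (X (\<sigma> 1))" by (rule S(5))
  have a2: "le (X (\<sigma> 1)) (?Y 1)" using H S(2) S(4) by simp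
  have a3: "le (?Y 1) (ivmax n le ?Y)" using max_props(2)[OF adm n S(1)] n by simp
  have a4: "le (ivmin n le X) (?Y 1)"
    by (rule adm_trans[OF adm min_props(3)[OF adm n X] S(4) y1 a1 a2])
  have "le (ivmin n le X) (ivmax n le ?Y)"
    by (rule adm_trans[OF adm min_props(3)[OF adm n X] y1 max_props(3)[OF adm n S(1)] a4 a3])
  thus "le (ivmin n le X) (SFG n le F (ivmax n le) m X)" using eq S(6) by simp
qed

lemma partB:
  assumes adm: "admissible_order le" and n: "n \<ge> 1"
    and Fr: "\<forall>X\<in>L01. \<forall>Y\<in>L01. F X Y \<in> L01"
    and m: "IV_fuzzy_measure n le m" and H: "\<forall>X\<in>L01. \<forall>Y\<in>L01. le (F X Y) X"
  shows "below_max n le (SFG n le F (ivmax n le) m)"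
  unfolding below_max_def
proof
  fix X assume X: "X \<in> inputs n"
  obtain \<sigma> where perm: "\<sigma> permutes {1..n}" and eq: "SFG n le F (ivmax n le) m X = SFG_perm n F (ivmax n le) m \<sigma> X"
    using SFG_perm_ex[OF adm X] by blast
  note S = basics[OF adm n Fr m X perm]
  let ?Y = "\<lambda>i. if i \<in> {1..n} then F (X (\<sigma> i)) (m (\<sigma> ` {i..n})) else iv0"
  have "le (ivmax n le ?Y) (ivmax n le X)"
  proof (rule max_le[OF adm n S(1) max_props(3)[OF adm n X]])
    fix i assume i: "i \<in> {1..n}"
    have "le (?Y i) (X (\<sigma> i))" using H S(3)[OF i] i by simp
    moreover have "?Y i \<in> L01" using S(1) i by (auto simp: inputs_def)
    ultimately show "le (?Y i) (ivmax n le X)"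
      using adm_trans[OF adm _ _ max_props(3)[OF adm n X]] S(3)[OF i] by blast
  qed
  thus "le (SFG n le F (ivmax n le) m X) (ivmax n le X)" using eq S(6) by simp
qed


lemma partIIA:
  assumes adm: "admissible_order le" and n: "n \<ge> 1"
    and m: "IV_fuzzy_measure n le m" and fL: "\<forall>X\<in>L01. f X \<in> L01"
    and H: "\<forall>X\<in>L01. le X (f X)" and G: "is_f_proj1 n G f \<or> is_f_max n le G f"
  shows "above_min n le (SFG n le (ivinf le) G m)"
  unfolding above_min_def
proof
  fix X assume X: "X \<in> inputs n"
  have Fr: "\<forall>X\<in>L01. \<forall>Y\<in>L01. ivinf le X Y \<in> L01" using ivinf_L01[OF adm] by blast
  obtain \<sigma> where perm: "\<sigma> permutes {1..n}" and eq: "SFG n le (ivinf le) G m X = SFG_perm n (ivinf le) G m \<sigma> X"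
    using SFG_perm_ex[OF adm X] by blast
  note S = basics[OF adm n Fr m X perm]
  let ?Y = "\<lambda>i. if i \<in> {1..n} then ivinf le (X (\<sigma> i)) (m (\<sigma> ` {i..n})) else iv0"
  have y1: "?Y 1 = X (\<sigma> 1)" using S(2) S(4) ivinf_1[OF adm] n by simp
  have mn: "le (ivmin n le X) (X (\<sigma> 1))" by (rule S(5))
  have minL: "ivmin n le X \<in> L01" by (rule min_props(3)[OF adm n X])
  have "le (ivmin n le X) (G ?Y)"
    using G
  proof
    assume "is_f_proj1 n G f"
    hence g: "G ?Y = f (?Y 1)" using S(1) unfolding is_f_proj1_def by blast
    have "G ?Y = f (X (\<sigma> 1))" using g unfolding y1 .
    thus ?thesis using adm_trans[OF adm minL S(4)] mn H fL S(4) by simp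
  next
    assume "is_f_max n le G f"
    hence g: "G ?Y = f (ivmax n le ?Y)" using S(1) by (simp add: is_f_max_def)
    have mxL: "ivmax n le ?Y \<in> L01" by (rule max_props(3)[OF adm n S(1)])
    have "le (X (\<sigma> 1)) (ivmax n le ?Y)" using max_props(2)[OF adm n S(1), of 1] n y1 by simp
    hence "le (ivmin n le X) (ivmax n le ?Y)" using adm_trans[OF adm minL S(4) mxL] mn by simp
    thus ?thesis using g adm_trans[OF adm minL mxL] H fL mxL by simp
  qed
  thus "le (ivmin n le X) (SFG n le (ivinf le) G m X)" using eq S(6) by simp
qed

lemma partIIB:
  assumes adm: "admissible_order le" and n: "n \<ge> 1"
    and m: "IV_fuzzy_measure n le m" and fL: "\<forall>X\<in>L01. f X \<in> L01"
    and H: "\<forall>X\<in>L01. le (f X) X" and G: "is_f_proj1 n G f \<or> is_f_max n le G f"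
  shows "below_max n le (SFG n le (ivinf le) G m)"
  unfolding below_max_def
proof
  fix X assume X: "X \<in> inputs n"
  have Fr: "\<forall>X\<in>L01. \<forall>Y\<in>L01. ivinf le X Y \<in> L01" using ivinf_L01[OF adm] by blast
  obtain \<sigma> where perm: "\<sigma> permutes {1..n}" and eq: "SFG n le (ivinf le) G m X = SFG_perm n (ivinf le) G m \<sigma> X"
    using SFG_perm_ex[OF adm X] by blast
  note S = basics[OF adm n Fr m X perm]
  let ?Y = "\<lambda>i. if i \<in> {1..n} then ivinf le (X (\<sigma> i)) (m (\<sigma> ` {i..n})) else iv0"
  have y1: "?Y 1 = X (\<sigma> 1)" using S(2) S(4) ivinf_1[OF adm] n by simp
  have maxL: "ivmax n le X \<in> L01" by (rule max_props(3)[OF adm n X])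
  have x1: "le (X (\<sigma> 1)) (ivmax n le X)" using S(3)[of 1] n by simp
  have "le (G ?Y) (ivmax n le X)"
    using G
  proof
    assume "is_f_proj1 n G f"
    hence g: "G ?Y = f (?Y 1)" using S(1) unfolding is_f_proj1_def by blast
    have "G ?Y = f (X (\<sigma> 1))" using g unfolding y1 .
    thus ?thesis using adm_trans[OF adm _ S(4) maxL] x1 H fL S(4) by simp
  next
    assume "is_f_max n le G f"
    hence g: "G ?Y = f (ivmax n le ?Y)" using S(1) by (simp add: is_f_max_def)
    have mxL: "ivmax n le ?Y \<in> L01" by (rule max_props(3)[OF adm n S(1)])
    have "le (ivmax n le ?Y) (ivmax n le X)"
    proof (rule max_le[OF adm n S(1) maxL])
      fix i assume i: "i \<in> {1..n}"
      have "le (?Y i) (X (\<sigma> i))" using ivinf_le[OF adm] S(3)[OF i] i by simp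
      moreover have "?Y i \<in> L01" using S(1) i by (auto simp: inputs_def)
      ultimately show "le (?Y i) (ivmax n le X)"
        using adm_trans[OF adm _ _ maxL] S(3)[OF i] by blast
    qed
    thus ?thesis using g adm_trans[OF adm _ mxL maxL] H fL mxL by simp
  qed
  thus "le (SFG n le (ivinf le) G m X) (ivmax n le X)" using eq S(6) by simp
qed


lemma partIIAid:
  assumes adm: "admissible_order le" and n: "n \<ge> 1"
    and m: "IV_fuzzy_measure n le m" and G: "is_f_proj1 n G id \<or> is_f_max n le G id"
  shows "above_min n le (SFG n le (ivinf le) G m)"
  by (rule partIIA[OF adm n m _ _ G]) (simp_all add: adm_refl[OF adm])

lemma partIIBid:
  assumes adm: "admissible_order le" and n: "n \<ge> 1"
    and m: "IV_fuzzy_measure n le m" and G: "is_f_proj1 n G id \<or> is_f_max n le G id"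
  shows "below_max n le (SFG n le (ivinf le) G m)"
  by (rule partIIB[OF adm n m _ _ G]) (simp_all add: adm_refl[OF adm])

theorem corollary3:
  fixes n :: nat and le :: "iv \<Rightarrow> iv \<Rightarrow> bool"
    and F :: "iv \<Rightarrow> iv \<Rightarrow> iv" and G :: "(nat \<Rightarrow> iv) \<Rightarrow> iv"
  assumes n: "n \<ge> 1"
    and adm: "admissible_order le"
    and F_range: "\<forall>X\<in>L01. \<forall>Y\<in>L01. F X Y \<in> L01"
    and G_range: "\<forall>Y\<in>inputs n. G Y \<in> L01"
  shows
   \<comment> \<open>(i)(a)\<close>
   "((\<forall>X\<in>L01. le X (F X iv1)) \<and> mono_second le F \<longrightarrow>
      (\<forall>m. IV_fuzzy_measure n le m \<and> SFG_defined n le F (ivmax n le) m \<longrightarrow>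
         above_min n le (SFG n le F (ivmax n le) m))) \<and>
   \<comment> \<open>(i)(a^s)\<close>
    ((\<forall>X\<in>L01. le X (F X iv1)) \<longrightarrow>
      (\<forall>m. IV_fuzzy_measure n le m \<and> symmetric_measure n m \<and> SFG_defined n le F (ivmax n le) m \<longrightarrow>
         above_min n le (SFG n le F (ivmax n le) m))) \<and>
   \<comment> \<open>(i)(b)\<close>
    ((\<forall>X\<in>L01. le (F X iv1) X) \<and> mono_second le F \<longrightarrow>
      (\<forall>m. IV_fuzzy_measure n le m \<and> SFG_defined n le F (ivmax n le) m \<longrightarrow>
         below_max n le (SFG n le F (ivmax n le) m))) \<and>
   \<comment> \<open>(i)(b^s)\<close>
    ((\<forall>X\<in>L01. \<forall>Y\<in>L01. le (F X Y) X) \<longrightarrow>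
      (\<forall>m. IV_fuzzy_measure n le m \<and> symmetric_measure n m \<and> SFG_defined n le F (ivmax n le) m \<longrightarrow>
         below_max n le (SFG n le F (ivmax n le) m))) \<and>
   \<comment> \<open>(i)(c)\<close>
    ((\<forall>X\<in>L01. F X iv1 = X) \<and> mono_second le F \<longrightarrow>
      (\<forall>m. IV_fuzzy_measure n le m \<and> SFG_defined n le F (ivmax n le) m \<longrightarrow>
         internal n le (SFG n le F (ivmax n le) m))) \<and>
   \<comment> \<open>(i)(c^s)\<close>
    ((\<forall>X\<in>L01. \<forall>Y\<in>L01. le (F X Y) X) \<and> (\<forall>X\<in>L01. F X iv1 = X) \<longrightarrow>
      (\<forall>m. IV_fuzzy_measure n le m \<and> symmetric_measure n m \<and> SFG_defined n le F (ivmax n le) m \<longrightarrow>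
         internal n le (SFG n le F (ivmax n le) m))) \<and>
   \<comment> \<open>(ii)(a)\<close>
    ((\<exists>f. (\<forall>X\<in>L01. f X \<in> L01) \<and> (\<forall>X\<in>L01. le X (f X)) \<and>
          (is_f_proj1 n G f \<or> is_f_max n le G f)) \<longrightarrow>
      (\<forall>m. IV_fuzzy_measure n le m \<and> SFG_defined n le (ivinf le) G m \<longrightarrow>
         above_min n le (SFG n le (ivinf le) G m))) \<and>
   \<comment> \<open>(ii)(b)\<close>
    ((\<exists>f. (\<forall>X\<in>L01. f X \<in> L01) \<and> (\<forall>X\<in>L01. le (f X) X) \<and>
          (is_f_proj1 n G f \<or> is_f_max n le G f)) \<longrightarrow>
      (\<forall>m. IV_fuzzy_measure n le m \<and> SFG_defined n le (ivinf le) G m \<longrightarrow>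
         below_max n le (SFG n le (ivinf le) G m))) \<and>
   \<comment> \<open>(ii)(c)\<close>
    ((is_f_proj1 n G id \<or> is_f_max n le G id) \<longrightarrow>
      (\<forall>m. IV_fuzzy_measure n le m \<and> SFG_defined n le (ivinf le) G m \<longrightarrow>
         internal n le (SFG n le (ivinf le) G m))) \<and>
   \<comment> \<open>(iii)\<close>
    (\<forall>m. IV_fuzzy_measure n le m \<and> SFG_defined n le (ivinf le) (ivmax n le) m \<longrightarrow>
         internal n le (SFG n le (ivinf le) (ivmax n le) m))"
  proof -
  have bm: "\<forall>X\<in>L01. \<forall>Y\<in>L01. le (F X Y) X"
    if ms: "mono_second le F" and h: "\<forall>X\<in>L01. le (F X iv1) X"
  proof (intro ballI)
    fix X Y assume X: "X \<in> L01" and Y: "Y \<in> L01"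
    have "le (F X Y) (F X iv1)" using ms X Y iv1_L01 adm_top[OF adm Y] by (simp add: mono_second_def)
    moreover have FXY: "F X Y \<in> L01" and FX1: "F X iv1 \<in> L01" using F_range X Y iv1_L01 by auto
    ultimately show "le (F X Y) X" using adm_trans[OF adm FXY FX1 X] h X by simp
  qed
  have eqA: "\<forall>X\<in>L01. le X (F X iv1)" if "\<forall>X\<in>L01. F X iv1 = X"
    using that adm_refl[OF adm] by simp
  have eqB: "\<forall>X\<in>L01. le (F X iv1) X" if "\<forall>X\<in>L01. F X iv1 = X"
    using that adm_refl[OF adm] by simp
  have idL: "\<forall>X\<in>L01. id X \<in> L01" and idA: "\<forall>X\<in>L01. le X (id X)" and idB: "\<forall>X\<in>L01. le (id X) X"
    using adm_refl[OF adm] by auto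
  have mx: "is_f_max n le (ivmax n le) id" by (simp add: is_f_max_def)
  note A = partA[OF adm n F_range] and B = partB[OF adm n F_range]
  note IIA = partIIA[OF adm n] and IIB = partIIB[OF adm n]
  note IIAid = partIIAid[OF adm n] and IIBid = partIIBid[OF adm n]
  show ?thesis
  proof (intro conjI impI allI)
    show "above_min n le (SFG n le F (ivmax n le) m)"
      if "(\<forall>X\<in>L01. le X (F X iv1)) \<and> mono_second le F"
        "IV_fuzzy_measure n le m \<and> SFG_defined n le F (ivmax n le) m" for m
      using A that by blast
    show "above_min n le (SFG n le F (ivmax n le) m)"
      if "\<forall>X\<in>L01. le X (F X iv1)"
        "IV_fuzzy_measure n le m \<and> symmetric_measure n m \<and> SFG_defined n le F (ivmax n le) m" for m
      using A that by blast
    show "below_max n le (SFG n le F (ivmax n le) m)"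
      if "(\<forall>X\<in>L01. le (F X iv1) X) \<and> mono_second le F"
        "IV_fuzzy_measure n le m \<and> SFG_defined n le F (ivmax n le) m" for m
      using B bm that by blast
    show "below_max n le (SFG n le F (ivmax n le) m)"
      if "\<forall>X\<in>L01. \<forall>Y\<in>L01. le (F X Y) X"
        "IV_fuzzy_measure n le m \<and> symmetric_measure n m \<and> SFG_defined n le F (ivmax n le) m" for m
      using B that by blast
    show "internal n le (SFG n le F (ivmax n le) m)"
      if "(\<forall>X\<in>L01. F X iv1 = X) \<and> mono_second le F"
        "IV_fuzzy_measure n le m \<and> SFG_defined n le F (ivmax n le) m" for m
    proof -
      have h: "\<forall>X\<in>L01. le X (F X iv1)" "\<forall>X\<in>L01. le (F X iv1) X" "mono_second le F"
        "IV_fuzzy_measure n le m" using that eqA eqB by blast+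
      show ?thesis unfolding internal_def using A[OF h(4) h(1)] B[OF h(4) bm[OF h(3) h(2)]] by blast
    qed
    show "internal n le (SFG n le F (ivmax n le) m)"
      if "(\<forall>X\<in>L01. \<forall>Y\<in>L01. le (F X Y) X) \<and> (\<forall>X\<in>L01. F X iv1 = X)"
        "IV_fuzzy_measure n le m \<and> symmetric_measure n m \<and> SFG_defined n le F (ivmax n le) m" for m
    proof -
      have h: "\<forall>X\<in>L01. le X (F X iv1)" "\<forall>X\<in>L01. \<forall>Y\<in>L01. le (F X Y) X"
        "IV_fuzzy_measure n le m" using that eqA by blast+
      show ?thesis unfolding internal_def using A[OF h(3) h(1)] B[OF h(3) h(2)] by blast
    qed
    show "above_min n le (SFG n le (ivinf le) G m)"
      if ex: "\<exists>f. (\<forall>X\<in>L01. f X \<in> L01) \<and> (\<forall>X\<in>L01. le X (f X)) \<and>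
          (is_f_proj1 n G f \<or> is_f_max n le G f)"
        and mm: "IV_fuzzy_measure n le m \<and> SFG_defined n le (ivinf le) G m" for m
    proof -
      obtain f where f: "\<forall>X\<in>L01. f X \<in> L01" "\<forall>X\<in>L01. le X (f X)"
          "is_f_proj1 n G f \<or> is_f_max n le G f" using ex by blast
      show ?thesis using IIA[OF _ f] mm by blast
    qed
    show "below_max n le (SFG n le (ivinf le) G m)"
      if ex: "\<exists>f. (\<forall>X\<in>L01. f X \<in> L01) \<and> (\<forall>X\<in>L01. le (f X) X) \<and>
          (is_f_proj1 n G f \<or> is_f_max n le G f)"
        and mm: "IV_fuzzy_measure n le m \<and> SFG_defined n le (ivinf le) G m" for m
    proof -
      obtain f where f: "\<forall>X\<in>L01. f X \<in> L01" "\<forall>X\<in>L01. le (f X) X"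
          "is_f_proj1 n G f \<or> is_f_max n le G f" using ex by blast
      show ?thesis using IIB[OF _ f] mm by blast
    qed
    show "internal n le (SFG n le (ivinf le) G m)"
      if "is_f_proj1 n G id \<or> is_f_max n le G id"
        "IV_fuzzy_measure n le m \<and> SFG_defined n le (ivinf le) G m" for m
    proof -
      have m: "IV_fuzzy_measure n le m" using that(2) by blast
      show ?thesis unfolding internal_def using IIAid[OF m that(1)] IIBid[OF m that(1)] by blast
    qed
    show "internal n le (SFG n le (ivinf le) (ivmax n le) m)"
      if "IV_fuzzy_measure n le m \<and> SFG_defined n le (ivinf le) (ivmax n le) m" for m
    proof -
      have m: "IV_fuzzy_measure n le m" using that by blast
      have g: "is_f_proj1 n (ivmax n le) id \<or> is_f_max n le (ivmax n le) id" using mx by blast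
      show ?thesis unfolding internal_def using IIAid[OF m g] IIBid[OF m g] by blast
    qed
  qed
qed

end
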